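(* Assume the setup of the context, in particular $N_j=\tilde N-n_j$. Let \[ D_1(N)=s_0^{2N-1}\prod_{p\mid s_0}p^{\nu_p(N-1)}\times\prod_{j=1}^m\Big\{\prod_{p\mid v_j}p^{\nu_p(n_j)}\prod_{p\nmid s_j}p^{M_p(r_j+(n_0+1)s_j)}\Big\}, \] \[ D_2(N)=\Big(\frac{d}{(d,s_0)}\Big)^{\tilde N}\prod_{p\mid s}p^{\nu_p(\tilde N)}\times\prod_p p^{M_p(U+V\tilde N)}, \] (products over primes $p$) and $D(N)=D_1(N)D_2(N)$. Then $D(N)Q_i(z)\in\mathbb{Z}[z]$ and $D(N)P_{ij}(z)\in\mathbb{Z}[z]$ for all $i=0,1,\dots,m$, $j=1,\dots,m$.
   Context: Let $m\ge1$ and let $\alpha_0,\alpha_1,\dots,\alpha_m$ be positive rational numbers with $\alpha_i-\alpha_j\notin\mathbb{Z}$ for $1\le i<j\le m$. Pochhammer symbol: $(x)_0=1$, $(x)_n=x(x+1)\cdots(x+n-1)$. Let $\varphi_j(z)=\sum_{n\ge0}\frac{(\alpha_j)_n}{(\alpha_j+\alpha_0)_n}z^n$. Write $\alpha_j=r_j/s_j$ ($j=0,\dots,m$) and $\alpha_j+\alpha_0=u_j/v_j$ ($j=1,\dots,m$) with positive integers, $\gcd(r_j,s_j)=\gcd(u_j,v_j)=1$; $R=\max_{1\le j\le m} r_j$, $S=\max s_j$, $U=\max u_j$, $V=\max v_j$; $d_j$ is the positive integer with $s_0s_j=d_jv_j$; $s,v,d$ are the least common multiples of $s_j$, $v_j$,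 $d_j$ ($j=1,\dots,m$) respectively; $\tilde d=d/\gcd(d,s_0)$. For $x>0$ and a prime $p$, $M_p(x)=\lfloor \log x/\log p\rfloor$ (so $p^{M_p(x)}=1$ for $p>x$), and $\nu_p(n)=\sum_{t\ge1}\lfloor n/p^t\rfloor$. Padé setup: let $n_1,\dots,n_m$ be positive integers, $N=n_1+\cdots+n_m$, $n_0\ge\max\{n_1,\dots,n_m\}$ an integer, $\tilde N=N+n_0$, and $N_j=\tilde N-n_j$. For $i=0,\dots,m$ and $\delta_{ij}$ the Kronecker delta, $Q_i(z)=\sum_{k=0}^Na_{ik}z^k$ with $a_{iN}=1$ and for $k=0,\dots,N-1$ \[ a_{i,N-k-1}=\sum_{\ell=k}^{N-1}(-1)^{\ell+1}\frac{(\alpha_0-1)_{\ell-k}}{(\ell-k)!}\frac{(\alpha_0+\ell+1)_{N-\ell-1}}{(N-\ell-1)!}\prod_{j=1}^m\frac{(\alpha_j+\alpha_0+n_0-n_j+\delta_{ij}+\ell+1)_{n_j}}{(\alpha_j+n_0-n_j+\delta_{ij}+1)_{n_j}}, \] and $P_{ij}(z)=\sum_{\mu=0}^{N_j+\delta_{ij}}c_{ij\mu}z^\mu$, $c_{ij\mu}=\sum_{k=0}^{\min\{N,\mu\}}a_{ik}\frac{(\alpha_j)_{\mu-k}}{(\alpha_j+\alpha_0)_{\mu-k}}$. *)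

theory Defs
  imports Complex_Main "HOL-Computational_Algebra.Primes"
begin

definition numr :: "rat \<Rightarrow> nat" where
  "numr q = nat (fst (quotient_of q))"
definition denr :: "rat \<Rightarrow> nat" where
  "denr q = nat (snd (quotient_of q))"

text \<open>Legendre's nu_p(n) = sum_{t>=1} floor(n/p^t); terms with t > n vanish for p >= 2.\<close>
definition nu :: "nat \<Rightarrow> nat \<Rightarrow> nat" where
  "nu p n = (\<Sum>t\<in>{1..n}. n div p ^ t)"

definition Mp :: "nat \<Rightarrow> nat \<Rightarrow> nat" where
  "Mp p x = nat \<lfloor>ln (real x) / ln (real p)\<rfloor>"

definition NN :: "nat \<Rightarrow> (nat \<Rightarrow> nat) \<Rightarrow> nat" where
  "NN m n = (\<Sum>j=1..m. n j)"

definition Ntil :: "nat \<Rightarrow> (nat \<Rightarrow> nat) \<Rightarrow> nat" where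
  "Ntil m n = NN m n + n 0"

definition kdelta :: "nat \<Rightarrow> nat \<Rightarrow> rat" where
  "kdelta i j = (if i = j then 1 else 0)"

text \<open>Coefficient a_{ik} of Q_i (zero outside 0..N).\<close>
definition acoef :: "nat \<Rightarrow> (nat \<Rightarrow> rat) \<Rightarrow> (nat \<Rightarrow> nat) \<Rightarrow> nat \<Rightarrow> nat \<Rightarrow> rat" where
  "acoef m \<alpha> n i k =
    (let N = NN m n in
     if k = N then 1
     else if k < N then
       (let kk = N - k - 1 in
        \<Sum>l=kk..N-1. (-1) ^ (l + 1)
          * (pochhammer (\<alpha> 0 - 1) (l - kk) / fact (l - kk))
          * (pochhammer (\<alpha> 0 + of_nat l + 1) (N - l - 1) / fact (N - l - 1))
          * (\<Prod>j=1..m.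
              pochhammer (\<alpha> j + \<alpha> 0 + of_nat (n 0) - of_nat (n j) + kdelta i j + of_nat l + 1) (n j)
              / pochhammer (\<alpha> j + of_nat (n 0) - of_nat (n j) + kdelta i j + 1) (n j)))
     else 0)"

text \<open>Coefficient c_{ij mu} of P_{ij}.\<close>
definition ccoef :: "nat \<Rightarrow> (nat \<Rightarrow> rat) \<Rightarrow> (nat \<Rightarrow> nat) \<Rightarrow> nat \<Rightarrow> nat \<Rightarrow> nat \<Rightarrow> rat" where
  "ccoef m \<alpha> n i j \<mu> =
    (\<Sum>k=0..min (NN m n) \<mu>. acoef m \<alpha> n i k
        * pochhammer (\<alpha> j) (\<mu> - k) / pochhammer (\<alpha> j + \<alpha> 0) (\<mu> - k))"

definition dj :: "(nat \<Rightarrow> rat) \<Rightarrow> nat \<Rightarrow> nat" where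
  "dj \<alpha> j = denr (\<alpha> 0) * denr (\<alpha> j) div denr (\<alpha> j + \<alpha> 0)"

definition D1 :: "nat \<Rightarrow> (nat \<Rightarrow> rat) \<Rightarrow> (nat \<Rightarrow> nat) \<Rightarrow> nat" where
  "D1 m \<alpha> n =
    (let N = NN m n; s0 = denr (\<alpha> 0) in
     s0 ^ (2 * N - 1) * (\<Prod>p\<in>prime_factors s0. p ^ nu p (N - 1))
     * (\<Prod>j=1..m.
          (\<Prod>p\<in>prime_factors (denr (\<alpha> j + \<alpha> 0)). p ^ nu p (n j))
        * (let x = numr (\<alpha> j) + (n 0 + 1) * denr (\<alpha> j) in
           \<Prod>p\<in>{p. prime p \<and> \<not> p dvd denr (\<alpha> j) \<and> p \<le> x}. p ^ Mp p x)))"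

definition D2 :: "nat \<Rightarrow> (nat \<Rightarrow> rat) \<Rightarrow> (nat \<Rightarrow> nat) \<Rightarrow> nat" where
  "D2 m \<alpha> n =
    (let Nt = Ntil m n; s0 = denr (\<alpha> 0);
         s = Lcm ((\<lambda>j. denr (\<alpha> j)) ` {1..m});
         d = Lcm ((\<lambda>j. dj \<alpha> j) ` {1..m});
         U = Max ((\<lambda>j. numr (\<alpha> j + \<alpha> 0)) ` {1..m});
         V = Max ((\<lambda>j. denr (\<alpha> j + \<alpha> 0)) ` {1..m});
         x = U + V * Nt in
     (d div gcd d s0) ^ Nt * (\<Prod>p\<in>prime_factors s. p ^ nu p Nt)
     * (\<Prod>p\<in>{p. prime p \<and> p \<le> x}. p ^ Mp p x))"

definition DD :: "nat \<Rightarrow> (nat \<Rightarrow> rat) \<Rightarrow> (nat \<Rightarrow> nat) \<Rightarrow> nat" where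
  "DD m \<alpha> n = D1 m \<alpha> n * D2 m \<alpha> n"

end

theory Submission
  imports Defs "HOL-Number_Theory.Cong"
begin


lemma mult_card:
  fixes m :: int and p :: int
  assumes "m \<noteq> 0" "prime p" "multiplicity p m \<le> K"
  shows "multiplicity p m = card {e\<in>{1..K}. p ^ e dvd m}"
proof -
  have nu: "\<not> is_unit p" using assms(2) using not_prime_unit by blast
  have X: "p ^ e dvd m \<longleftrightarrow> e \<le> multiplicity p m" for e
    by (rule power_dvd_iff_le_multiplicity[OF assms(1) nu])
  have "{e\<in>{1..K}. p ^ e dvd m} = {1..multiplicity p m}"
    unfolding X using assms(3) by auto
  thus ?thesis by simp
qed

lemma mult_prod_count:
  fixes f :: "nat \<Rightarrow> int" and p :: int
  assumes "prime p" "\<And>t. t < n \<Longrightarrow> f t \<noteq> 0" "\<And>t. t < n \<Longrightarrow> multiplicity p (f t) \<le> K"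
  shows "multiplicity p (\<Prod>t<n. f t) = (\<Sum>e\<in>{1..K}. card {t. t < n \<and> p ^ e dvd f t})"
proof -
  have "multiplicity p (\<Prod>t<n. f t) = (\<Sum>t<n. multiplicity p (f t))"
    using assms by (intro prime_elem_multiplicity_prod_distrib) auto
  also have "\<dots> = (\<Sum>t<n. card {e\<in>{1..K}. p ^ e dvd f t})"
    using assms mult_card by (intro sum.cong) auto
  also have "\<dots> = (\<Sum>t<n. \<Sum>e\<in>{1..K}. of_bool (p ^ e dvd f t))"
    by (intro sum.cong) (auto simp: Int_def)
  also have "\<dots> = (\<Sum>e\<in>{1..K}. \<Sum>t<n. of_bool (p ^ e dvd f t))"
    by (rule sum.swap)
  also have "\<dots> = (\<Sum>e\<in>{1..K}. card {t. t < n \<and> p ^ e dvd f t})"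
    by (intro sum.cong) (auto simp: Int_def lessThan_def)
  finally show ?thesis .
qed

lemma ap_residue:
  fixes a s :: int and q :: nat
  assumes "q > 0" "coprime (int q) s"
  obtains t0 where "t0 < q" "\<And>t::nat. (int q dvd a + int t * s) \<longleftrightarrow> t mod q = t0"
proof -
  obtain x where x: "[s * x = 1] (mod int q)" using cong_solve_coprime_int[of s "int q"] assms
    by (auto simp: coprime_commute)
  have cx: "coprime x (int q)"
    using x by (metis cong_imp_coprime cong_sym coprime_1_left coprime_mult_left_iff)
  define t0 where "t0 = nat ((- a * x) mod int q)"
  have "t0 < q" using assms unfolding t0_def by (simp add: nat_less_iff)
  moreover have "(int q dvd a + int t * s) \<longleftrightarrow> t mod q = t0" for t :: nat
  proof -
    have "(int q dvd a + int t * s) \<longleftrightarrow> int q dvd (a + int t * s) * x"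
      using cx by (metis coprime_commute coprime_dvd_mult_left_iff)
    also have "\<dots> \<longleftrightarrow> [(a + int t * s) * x = 0] (mod int q)"
      by (simp add: cong_0_iff)
    also have "[(a + int t * s) * x = a * x + int t] (mod int q)"
    proof -
      have "[(a + int t * s) * x = a * x + int t * (s * x)] (mod int q)"
        by (simp add: algebra_simps)
      moreover have "[a * x + int t * (s * x) = a * x + int t * 1] (mod int q)"
        using x by (intro cong_add cong_mult) auto
      ultimately show ?thesis by (metis cong_trans mult_1_right)
    qed
    hence "[(a + int t * s) * x = 0] (mod int q) \<longleftrightarrow> [a * x + int t = 0] (mod int q)"
      by (meson cong_sym cong_trans)
    also have "\<dots> \<longleftrightarrow> [int t = - a * x] (mod int q)"
      by (simp add: cong_iff_dvd_diff algebra_simps)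
    also have "\<dots> \<longleftrightarrow> int t mod int q = (- a * x) mod int q"
      by (simp add: cong_def)
    also have "\<dots> \<longleftrightarrow> t mod q = t0"
      unfolding t0_def using assms by (auto simp: zmod_int[symmetric])
    finally show ?thesis .
  qed
  ultimately show ?thesis using that by blast
qed


lemma card_mod_lower:
  assumes "q > 0" "t0 < q"
  shows "n div q \<le> card {t. t < n \<and> t mod q = t0}"
proof -
  have inj: "inj_on (\<lambda>i. t0 + q * i) {..<n div q}" using assms(1) by (auto simp: inj_on_def)
  have sub: "(\<lambda>i. t0 + q * i) ` {..<n div q} \<subseteq> {t. t < n \<and> t mod q = t0}"
  proof
    fix y assume "y \<in> (\<lambda>i. t0 + q * i) ` {..<n div q}"
    then obtain i where i: "i < n div q" "y = t0 + q * i" by auto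
    have "t0 + q * i < q + q * i" using assms by simp
    also have "\<dots> = q * (i + 1)" by simp
    also have "\<dots> \<le> q * (n div q)" using i by (intro mult_left_mono) auto
    also have "\<dots> \<le> n" by simp
    finally have "y < n" using i by simp
    moreover have "y mod q = t0" using i assms by simp
    ultimately show "y \<in> {t. t < n \<and> t mod q = t0}" by simp
  qed
  have "card ((\<lambda>i. t0 + q * i) ` {..<n div q}) = n div q" using inj by (simp add: card_image)
  moreover have "card ((\<lambda>i. t0 + q * i) ` {..<n div q}) \<le> card {t. t < n \<and> t mod q = t0}"
    using sub by (intro card_mono) auto
  ultimately show ?thesis by simp
qed



lemma card_mod_upper:
  assumes "q > 0"
  shows "card {t. t < n \<and> t mod q = t0} \<le> n div q + 1"
proof -
  have inj: "inj_on (\<lambda>t. t div q) {t. t < n \<and> t mod q = t0}"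
  proof
    fix x y assume a: "x \<in> {t. t < n \<and> t mod q = t0}" "y \<in> {t. t < n \<and> t mod q = t0}" "x div q = y div q"
    have "x = x div q * q + x mod q" by simp
    also have "\<dots> = y div q * q + y mod q" using a by simp
    also have "\<dots> = y" by simp
    finally show "x = y" .
  qed
  have sub: "(\<lambda>t. t div q) ` {t. t < n \<and> t mod q = t0} \<subseteq> {..n div q}"
    by (auto intro!: div_le_mono)
  have "card {t. t < n \<and> t mod q = t0} = card ((\<lambda>t. t div q) ` {t. t < n \<and> t mod q = t0})"
    using inj by (simp add: card_image)
  also have "\<dots> \<le> card {..n div q}" using sub by (intro card_mono) auto
  finally show ?thesis by simp
qed




lemma div_pow_zero:
  fixes p :: nat assumes "p \<ge> 2" "e > n" shows "n div p ^ e = 0"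
proof -
  have "n < e" by fact
  also have "e < 2 ^ e" by (rule less_exp)
  also have "2 ^ e \<le> p ^ e" using assms by (intro power_mono) auto
  finally show ?thesis by simp
qed

lemma nusum_eq:
  fixes p :: nat assumes "p \<ge> 2" "K \<ge> n"
  shows "(\<Sum>e\<in>{1..K}. n div p ^ e) = nu p n"
proof -
  have "(\<Sum>e\<in>{1..K}. n div p ^ e) = (\<Sum>e\<in>{1..n}. n div p ^ e) + (\<Sum>e\<in>{n<..K}. n div p ^ e)"
  proof -
    have "{1..K} = {1..n} \<union> {n<..K}" using assms by auto
    thus ?thesis by (simp add: sum.union_disjoint ivl_disj_int)
  qed
  also have "(\<Sum>e\<in>{n<..K}. n div p ^ e) = 0" using div_pow_zero[OF assms(1)] by simp
  finally show ?thesis by (simp add: nu_def)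
qed

lemma nusum_le:
  fixes p :: nat assumes "p \<ge> 2"
  shows "(\<Sum>e\<in>{1..K}. n div p ^ e) \<le> nu p n"
proof -
  have "(\<Sum>e\<in>{1..K}. n div p ^ e) \<le> (\<Sum>e\<in>{1..K+n}. n div p ^ e)"
    by (intro sum_mono2) auto
  also have "\<dots> = nu p n" using assms by (intro nusum_eq) auto
  finally show ?thesis .
qed

lemma nu_mono:
  fixes p :: nat assumes "p \<ge> 2" "a \<le> b" shows "nu p a \<le> nu p b"
proof -
  have "nu p a = (\<Sum>e\<in>{1..b}. a div p ^ e)" using assms by (intro nusum_eq[symmetric]) auto
  also have "\<dots> \<le> (\<Sum>e\<in>{1..b}. b div p ^ e)" using assms by (intro sum_mono div_le_mono) auto
  also have "\<dots> = nu p b" by (simp add: nu_def)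
  finally show ?thesis .
qed

lemma div_add_le: "(a::nat) div q + b div q \<le> (a + b) div q"
  using div_add1_eq[of a b q] by linarith

lemma nu_add:
  fixes p :: nat assumes "p \<ge> 2" shows "nu p a + nu p b \<le> nu p (a + b)"
proof -
  have "nu p a + nu p b = (\<Sum>e\<in>{1..a+b}. a div p ^ e) + (\<Sum>e\<in>{1..a+b}. b div p ^ e)"
    using nusum_eq[OF assms, where K="a+b" and n=a] nusum_eq[OF assms, where K="a+b" and n=b] by simp
  also have "\<dots> = (\<Sum>e\<in>{1..a+b}. a div p ^ e + b div p ^ e)" by (simp add: sum.distrib)
  also have "\<dots> \<le> (\<Sum>e\<in>{1..a+b}. (a + b) div p ^ e)" by (intro sum_mono div_add_le)
  also have "\<dots> = nu p (a + b)" by (simp add: nu_def)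
  finally show ?thesis .
qed

lemma Mp_ge:
  fixes p :: nat assumes "prime p" "p ^ e \<le> x" shows "e \<le> Mp p x"
proof -
  have p1: "real p > 1" using prime_gt_1_nat[OF assms(1)] by simp
  have "0 < p ^ e" using prime_gt_0_nat[OF assms(1)] by simp
  hence "0 < x" using assms(2) by linarith
  hence x0: "real x > 0" by simp
  have "real (p ^ e) \<le> real x" using assms by simp
  hence "ln (real (p ^ e)) \<le> ln (real x)" using p1 x0 by (subst ln_le_cancel_iff) auto
  hence "real e * ln (real p) \<le> ln (real x)" using p1 by (simp add: ln_realpow)
  hence "real e \<le> ln (real x) / ln (real p)" using p1 by (simp add: pos_le_divide_eq)
  hence "int e \<le> \<lfloor>ln (real x) / ln (real p)\<rfloor>" by (simp add: le_floor_iff)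
  thus ?thesis unfolding Mp_def by simp
qed

lemma card_pow_le_Mp:
  fixes p :: nat assumes "prime p"
  shows "card {e\<in>{1..K}. p ^ e \<le> x} \<le> Mp p x"
proof -
  have "{e\<in>{1..K}. p ^ e \<le> x} \<subseteq> {1..Mp p x}" using Mp_ge[OF assms] by auto
  from card_mono[OF _ this] show ?thesis by simp
qed




lemma ap_card_lower:
  fixes p :: nat and a s :: int
  assumes "prime p" "\<not> int p dvd s" "e \<ge> 1"
  shows "n div p ^ e \<le> card {t. t < n \<and> int p ^ e dvd a + int t * s}"
proof -
  define q where "q = p ^ e"
  have q0: "q > 0" using assms prime_gt_0_nat unfolding q_def by simp
  have "coprime (int p) s" using assms(1,2) by (simp add: prime_imp_coprime)
  hence cop: "coprime (int q) s" unfolding q_def by simp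
  obtain t0 where t0: "t0 < q" "\<And>t::nat. (int q dvd a + int t * s) \<longleftrightarrow> t mod q = t0"
    using ap_residue[OF q0 cop] by blast
  have "{t. t < n \<and> int p ^ e dvd a + int t * s} = {t. t < n \<and> t mod q = t0}"
    using t0(2) unfolding q_def by auto
  with card_mod_lower[OF q0 t0(1), of n] show ?thesis unfolding q_def by simp
qed

lemma ap_card_upper:
  fixes p :: nat and a s :: int
  assumes "prime p" "\<not> int p dvd s" "e \<ge> 1" "\<And>t. t < n \<Longrightarrow> 0 < a + int t * s \<and> a + int t * s \<le> int x"
  shows "card {t. t < n \<and> int p ^ e dvd a + int t * s} \<le> n div p ^ e + of_bool (p ^ e \<le> x)"
proof (cases "p ^ e \<le> x")
  case True
  define q where "q = p ^ e"
  have q0: "q > 0" using assms prime_gt_0_nat unfolding q_def by simp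
  have "coprime (int p) s" using assms(1,2) by (simp add: prime_imp_coprime)
  hence cop: "coprime (int q) s" unfolding q_def by simp
  obtain t0 where t0: "t0 < q" "\<And>t::nat. (int q dvd a + int t * s) \<longleftrightarrow> t mod q = t0"
    using ap_residue[OF q0 cop] by blast
  have "{t. t < n \<and> int p ^ e dvd a + int t * s} = {t. t < n \<and> t mod q = t0}"
    using t0(2) unfolding q_def by auto
  with card_mod_upper[OF q0, of n t0] True show ?thesis unfolding q_def by simp
next
  case False
  have "{t. t < n \<and> int p ^ e dvd a + int t * s} = {}"
  proof (rule ccontr)
    assume "{t. t < n \<and> int p ^ e dvd a + int t * s} \<noteq> {}"
    then obtain t where t: "t < n" "int p ^ e dvd a + int t * s" by auto
    have "int p ^ e \<le> a + int t * s" using t assms(4)[OF t(1)] by (intro zdvd_imp_le) auto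
    also have "\<dots> \<le> int x" using assms(4)[OF t(1)] by simp
    finally have "p ^ e \<le> x" by (metis of_nat_le_iff of_nat_power)
    with False show False by simp
  qed
  hence "card {t. t < n \<and> int p ^ e dvd a + int t * s} = 0" by (simp only: card.empty)
  thus ?thesis by linarith
qed

lemma ap_lower:
  fixes p :: nat and a s :: int
  assumes "prime p" "\<not> int p dvd s"
  shows "int p ^ nu p n dvd (\<Prod>t<n. a + int t * s)"
proof (cases "\<exists>t<n. a + int t * s = 0")
  case True
  then obtain t0 where "t0 < n" "a + int t0 * s = 0" by blast
  hence "(\<Prod>t<n. a + int t * s) = 0" by (metis (no_types, lifting) finite_lessThan lessThan_iff prod_zero_iff)
  thus ?thesis by (metis dvd_0_right)
next
  case False
  define K where "K = n + (\<Sum>t<n. multiplicity (int p) (a + int t * s))"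
  have pi: "prime (int p)" using assms by simp
  have Kb: "multiplicity (int p) (a + int t * s) \<le> K" if "t < n" for t
  proof -
    have "multiplicity (int p) (a + int t * s) \<le> (\<Sum>t<n. multiplicity (int p) (a + int t * s))"
      using that by (intro member_le_sum) auto
    thus ?thesis unfolding K_def by simp
  qed
  have "nu p n = (\<Sum>e\<in>{1..K}. n div p ^ e)"
    using prime_ge_2_nat[OF assms(1)] by (intro nusum_eq[symmetric]) (auto simp: K_def)
  also have "\<dots> \<le> (\<Sum>e\<in>{1..K}. card {t. t < n \<and> int p ^ e dvd a + int t * s})"
    using assms by (intro sum_mono ap_card_lower) auto
  also have "\<dots> = multiplicity (int p) (\<Prod>t<n. a + int t * s)"
    using False Kb by (intro mult_prod_count[symmetric] pi) auto
  finally show ?thesis by (rule multiplicity_dvd')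
qed

lemma ap_upper:
  fixes p :: nat and a s :: int
  assumes "prime p" "\<not> int p dvd s" "\<And>t. t < n \<Longrightarrow> 0 < a + int t * s \<and> a + int t * s \<le> int x"
  shows "multiplicity (int p) (\<Prod>t<n. a + int t * s) \<le> nu p n + Mp p x"
proof -
  define K where "K = n + (\<Sum>t<n. multiplicity (int p) (a + int t * s))"
  have pi: "prime (int p)" using assms by simp
  have Kb: "multiplicity (int p) (a + int t * s) \<le> K" if "t < n" for t
  proof -
    have "multiplicity (int p) (a + int t * s) \<le> (\<Sum>t<n. multiplicity (int p) (a + int t * s))"
      using that by (intro member_le_sum) auto
    thus ?thesis unfolding K_def by simp
  qed
  have nz: "a + int t * s \<noteq> 0" if "t < n" for t using assms(3)[OF that] by simp
  have "multiplicity (int p) (\<Prod>t<n. a + int t * s) = (\<Sum>e\<in>{1..K}. card {t. t < n \<and> int p ^ e dvd a + int t * s})"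
    using nz Kb by (intro mult_prod_count pi) auto
  also have "\<dots> \<le> (\<Sum>e\<in>{1..K}. n div p ^ e + of_bool (p ^ e \<le> x))"
    using assms by (intro sum_mono ap_card_upper) auto
  also have "\<dots> = (\<Sum>e\<in>{1..K}. n div p ^ e) + card {e\<in>{1..K}. p ^ e \<le> x}"
    by (simp add: sum.distrib Int_def)
  also have "\<dots> \<le> nu p n + Mp p x"
    using nusum_le[where p=p and K=K and n=n] card_pow_le_Mp[OF assms(1), of K x] prime_ge_2_nat[OF assms(1)]
    by linarith
  finally show ?thesis .
qed

lemma fact_prod_int: "(fact n :: int) = (\<Prod>t<n. 1 + int t * 1)"
  by (induction n) (simp_all add: algebra_simps)

lemma fact_card_upper:
  fixes q :: nat assumes "q > 0"
  shows "card {t. t < n \<and> int q dvd 1 + int t * 1} \<le> n div q"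
proof -
  let ?S = "{t. t < n \<and> int q dvd 1 + int t * 1}"
  have key: "t + 1 = q * (t div q + 1)" if "t \<in> ?S" for t
  proof -
    from that have "int q dvd int (t + 1)" by (simp add: add.commute)
    hence "q dvd t + 1" by (simp only: of_nat_dvd_iff)
    then obtain c where c: "t + 1 = q * c" by blast
    then obtain c' where c': "c = Suc c'" using assms by (cases c) auto
    have t: "t = (q - 1) + c' * q" using c c' assms by (simp add: mult.commute)
    have "((q - 1) + c' * q) div q = c' + (q - 1) div q"
      using assms by (intro div_mult_self1) simp
    hence "t div q = c'" using assms t by simp
    thus ?thesis using c c' by simp
  qed
  have inj: "inj_on (\<lambda>t. t div q) ?S"
  proof
    fix x y assume "x \<in> ?S" "y \<in> ?S" "x div q = y div q"
    with key[of x] key[of y] have "x + 1 = y + 1" by simp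
    thus "x = y" by simp
  qed
  have sub: "(\<lambda>t. t div q) ` ?S \<subseteq> {..<n div q}"
  proof
    fix y assume "y \<in> (\<lambda>t. t div q) ` ?S"
    then obtain t where t: "t \<in> ?S" "y = t div q" by auto
    have "(t div q + 1) * q \<le> n" using key[OF t(1)] t(1) by (simp add: mult.commute)
    hence "t div q + 1 \<le> n div q" using assms by (simp add: less_eq_div_iff_mult_less_eq)
    thus "y \<in> {..<n div q}" using t by auto
  qed
  have "card ?S = card ((\<lambda>t. t div q) ` ?S)" using inj by (simp add: card_image)
  also have "\<dots> \<le> card {..<n div q}" using sub by (intro card_mono) auto
  finally show ?thesis by simp
qed

lemma fact_upper:
  fixes p :: nat assumes "prime p"
  shows "multiplicity (int p) (fact n :: int) \<le> nu p n"
proof -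
  define K where "K = n + (\<Sum>t<n. multiplicity (int p) (1 + int t * 1))"
  have pi: "prime (int p)" using assms by simp
  have Kb: "multiplicity (int p) (1 + int t * 1) \<le> K" if "t < n" for t
  proof -
    have "multiplicity (int p) (1 + int t * 1) \<le> (\<Sum>t<n. multiplicity (int p) (1 + int t * 1))"
      using that by (intro member_le_sum) auto
    thus ?thesis unfolding K_def by simp
  qed
  have "multiplicity (int p) (fact n :: int) = (\<Sum>e\<in>{1..K}. card {t. t < n \<and> int p ^ e dvd 1 + int t * 1})"
    unfolding fact_prod_int using Kb by (intro mult_prod_count pi) auto
  also have "\<dots> \<le> (\<Sum>e\<in>{1..K}. n div p ^ e)"
  proof (intro sum_mono)
    fix e assume "e \<in> {1..K}"
    have "p ^ e > 0" using prime_gt_0_nat[OF assms] by simp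
    from fact_card_upper[OF this, of n] show "card {t. t < n \<and> int p ^ e dvd 1 + int t * 1} \<le> n div p ^ e"
      by simp
  qed
  also have "\<dots> \<le> nu p n" using nusum_le prime_ge_2_nat[OF assms] by blast
  finally show ?thesis .
qed




lemma mult_nat_int:
  fixes p n :: nat assumes "prime p"
  shows "multiplicity (int p) (int n) = multiplicity p n"
proof (cases "n = 0")
  case True thus ?thesis by simp
next
  case False
  have u1: "\<not> is_unit p" using assms not_prime_unit by blast
  have u2: "\<not> is_unit (int p)" using assms not_prime_unit prime_nat_int_transfer by blast
  have n2: "int n \<noteq> 0" using False by simp
  have "(int p) ^ k dvd int n \<longleftrightarrow> p ^ k dvd n" for k
    by (metis of_nat_dvd_iff of_nat_power)
  hence "k \<le> multiplicity (int p) (int n) \<longleftrightarrow> k \<le> multiplicity p n" for k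
    using power_dvd_iff_le_multiplicity[OF n2 u2, of k] power_dvd_iff_le_multiplicity[OF False u1, of k]
    by simp
  thus ?thesis by (meson le_antisym order_refl)
qed

lemma dvd_by_prime_mult:
  fixes A B :: int
  assumes "A \<noteq> 0" "\<And>p::nat. prime p \<Longrightarrow> B \<noteq> 0 \<Longrightarrow> multiplicity (int p) A \<le> multiplicity (int p) B"
  shows "A dvd B"
proof (cases "B = 0")
  case True thus ?thesis by simp
next
  case False
  show ?thesis
  proof (rule multiplicity_le_imp_dvd[OF assms(1)])
    fix q :: int assume q: "prime q"
    hence "q = int (nat q)" using prime_gt_0_int[OF q] by simp
    moreover have "prime (nat q)" using q by simp
    ultimately show "multiplicity q A \<le> multiplicity q B" using assms(2)[of "nat q"] False by metis
  qed
qed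

lemma mult_primepow_prod:
  fixes p :: nat
  assumes "finite S" "\<And>q. q \<in> S \<Longrightarrow> prime q" "prime p"
  shows "multiplicity (int p) (int (\<Prod>q\<in>S. q ^ f q)) = (if p \<in> S then f p else 0)"
  unfolding mult_nat_int[OF assms(3)] by (rule multiplicity_prod_prime_powers[OF assms])

lemma mult_mult_int:
  fixes p :: nat and x y :: int
  assumes "prime p" "x \<noteq> 0" "y \<noteq> 0"
  shows "multiplicity (int p) (x * y) = multiplicity (int p) x + multiplicity (int p) y"
  using assms by (intro prime_elem_multiplicity_mult_distrib) auto

lemma mult_ge_of_dvd:
  fixes p :: nat and x :: int
  assumes "prime p" "x \<noteq> 0" "int p ^ k dvd x"
  shows "k \<le> multiplicity (int p) x"
proof -
  have u2: "\<not> is_unit (int p)" using assms not_prime_unit prime_nat_int_transfer by blast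
  show ?thesis using power_dvd_iff_le_multiplicity[OF assms(2) u2] assms(3) by simp
qed

lemma Mp_small:
  fixes p x :: nat assumes "x < p" shows "Mp p x = 0"
proof (cases "x = 0")
  case True thus ?thesis by (simp add: Mp_def)
next
  case False
  have "0 \<le> ln (real x)" using False by simp
  moreover have "ln (real x) < ln (real p)" using False assms by simp
  ultimately have "ln (real x) / ln (real p) < 1" "0 \<le> ln (real x) / ln (real p)"
    by (simp_all add: divide_less_eq)
  hence "\<lfloor>ln (real x) / ln (real p)\<rfloor> = 0" by (simp add: floor_eq_iff)
  thus ?thesis by (simp add: Mp_def)
qed

lemma poch_rat:
  fixes a :: int and s :: nat assumes "s > 0"
  shows "pochhammer (of_int a / of_nat s :: rat) b = of_int (\<Prod>t<b. a + int t * int s) / of_nat s ^ b"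
proof -
  have "pochhammer (of_int a / of_nat s :: rat) b = (\<Prod>t<b. of_int (a + int t * int s) / of_nat s)"
    unfolding pochhammer_prod using assms by (intro prod.cong) (auto simp: field_simps)
  also have "\<dots> = of_int (\<Prod>t<b. a + int t * int s) / of_nat s ^ b"
    by (simp add: prod_dividef)
  finally show ?thesis .
qed

lemma div_Ints: "(b::int) dvd a \<Longrightarrow> (of_int a / of_int b :: rat) \<in> \<int>"
  using of_int_divide_in_Ints by blast

lemma G:
  fixes a :: int and s b :: nat assumes "s > 0"
  shows "of_nat (s ^ b * (\<Prod>p\<in>prime_factors s. p ^ nu p b)) * pochhammer (of_int a / of_nat s :: rat) b / fact b \<in> \<int>"
proof -
  define P where "P = (\<Prod>t<b. a + int t * int s)"
  define C where "C = (\<Prod>p\<in>prime_factors s. p ^ nu p b)"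
  have dv: "(fact b :: int) dvd P * int C"
  proof (rule dvd_by_prime_mult)
    show "(fact b :: int) \<noteq> 0" by simp
    fix p :: nat assume p: "prime p" and nz: "P * int C \<noteq> 0"
    have P0: "P \<noteq> 0" and C0: "int C \<noteq> 0" using nz by auto
    have "multiplicity (int p) (fact b :: int) \<le> nu p b" by (rule fact_upper[OF p])
    also have "nu p b \<le> multiplicity (int p) (P * int C)"
    proof (cases "p dvd s")
      case True
      hence "p \<in> prime_factors s" using p assms by (simp add: in_prime_factors_iff)
      hence "multiplicity (int p) (int C) = nu p b" unfolding C_def
        by (subst mult_primepow_prod) (auto simp: p in_prime_factors_iff)
      thus ?thesis using mult_mult_int[OF p P0 C0] by simp
    next
      case False
      hence "\<not> int p dvd int s" by simp
      from ap_lower[OF p this, where a=a and n=b] have "nu p b \<le> multiplicity (int p) P"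
        unfolding P_def using mult_ge_of_dvd[OF p] P0 P_def by blast
      thus ?thesis using mult_mult_int[OF p P0 C0] by simp
    qed
    finally show "multiplicity (int p) (fact b :: int) \<le> multiplicity (int p) (P * int C)" .
  qed
  have "of_nat (s ^ b * C) * pochhammer (of_int a / of_nat s :: rat) b / fact b
        = of_int (P * int C) / of_int (fact b)"
    unfolding poch_rat[OF assms] P_def using assms by (simp add: field_simps)
  also have "\<dots> \<in> \<int>" by (rule div_Ints[OF dv])
  finally show ?thesis unfolding C_def .
qed




lemma poch_nat:
  fixes a e s :: nat assumes "s > 0"
  shows "pochhammer (of_nat a / of_nat s + of_nat e :: rat) b
       = of_int (\<Prod>t<b. int (a + e * s) + int t * int s) / of_nat s ^ b"
proof -
  have "of_nat a / of_nat s + of_nat e = (of_int (int (a + e * s)) / of_nat s :: rat)"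
    using assms by (simp add: field_simps)
  thus ?thesis using poch_rat[OF assms, of "int (a + e * s)" b] by simp
qed

lemma not_dvd_ap_prod:
  fixes p :: nat and a s :: int
  assumes "prime p" "int p dvd s" "\<not> int p dvd a"
  shows "multiplicity (int p) (\<Prod>t<n. a + int t * s) = 0"
proof -
  have "\<not> int p dvd (\<Prod>t<n. a + int t * s)"
  proof
    assume "int p dvd (\<Prod>t<n. a + int t * s)"
    then obtain t where "int p dvd a + int t * s"
      using prime_dvd_prod_iff[of "{..<n}" "int p"] assms(1) by auto
    moreover have "int p dvd int t * s" using assms(2) by simp
    ultimately have "int p dvd a" using dvd_add_left_iff by blast
    with assms(3) show False by simp
  qed
  thus ?thesis by (rule not_dvd_imp_multiplicity_0)
qed

lemma mult_F2:
  fixes p x :: nat and P :: "nat \<Rightarrow> bool"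
  assumes "prime p" "P p"
  shows "multiplicity (int p) (int (\<Prod>q\<in>{q. prime q \<and> P q \<and> q \<le> x}. q ^ Mp q x)) = Mp p x"
proof -
  have "multiplicity (int p) (int (\<Prod>q\<in>{q. prime q \<and> P q \<and> q \<le> x}. q ^ Mp q x))
      = (if p \<in> {q. prime q \<and> P q \<and> q \<le> x} then Mp p x else 0)"
    by (rule mult_primepow_prod) (auto simp: assms(1))
  thus ?thesis using Mp_small[of x p] assms by auto
qed

lemma H:
  fixes r s u v s0 dd e1 e2 n x :: nat
  assumes "r > 0" "s > 0" "u > 0" "v > 0" "s0 > 0" "coprime r s" "s0 * s = dd * v"
    "\<And>t. t < n \<Longrightarrow> r + (e2 + t) * s \<le> x"
  shows "of_nat (s0 ^ n * ((\<Prod>p\<in>prime_factors v. p ^ nu p n) * (\<Prod>p\<in>{p. prime p \<and> \<not> p dvd s \<and> p \<le> x}. p ^ Mp p x)))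
     * (pochhammer (of_nat u / of_nat v + of_nat e1 :: rat) n / pochhammer (of_nat r / of_nat s + of_nat e2) n) \<in> \<int>"
proof -
  define B where "B = (\<Prod>t<n. int (u + e1 * v) + int t * int v)"
  define A where "A = (\<Prod>t<n. int (r + e2 * s) + int t * int s)"
  define F1 where "F1 = (\<Prod>p\<in>prime_factors v. p ^ nu p n)"
  define F2 where "F2 = (\<Prod>p\<in>{p. prime p \<and> \<not> p dvd s \<and> p \<le> x}. p ^ Mp p x)"
  have pos: "int (c + k) + int t * int w > 0" if "c > 0" for c k t w :: nat
    using that by (simp add: add_pos_nonneg)
  have A0: "A \<noteq> 0" unfolding A_def using pos[OF assms(1), of "e2 * s" _ s] by (simp add: prod_zero_iff) (metis less_irrefl)
  have B0: "B \<noteq> 0" unfolding B_def using pos[OF assms(3), of "e1 * v" _ v] by (simp add: prod_zero_iff) (metis less_irrefl)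
  have F10: "int F1 \<noteq> 0" unfolding F1_def by (auto simp: prod_zero_iff in_prime_factors_iff)
  have F20: "int F2 \<noteq> 0" unfolding F2_def by (auto simp: prod_zero_iff)
  have dv: "A dvd B * int F1 * int F2"
  proof (rule dvd_by_prime_mult[OF A0])
    fix p :: nat assume p: "prime p"
    have mBF: "multiplicity (int p) (B * int F1 * int F2)
        = multiplicity (int p) B + multiplicity (int p) (int F1) + multiplicity (int p) (int F2)"
      using mult_mult_int[OF p] B0 F10 F20 by simp
    show "multiplicity (int p) A \<le> multiplicity (int p) (B * int F1 * int F2)"
    proof (cases "p dvd s")
      case True
      have "\<not> p dvd r" using True assms(6) p
        by (metis coprime_common_divisor not_prime_unit)
      hence "\<not> int p dvd int (r + e2 * s)" using True
        by (metis dvd_add_left_iff dvd_mult of_nat_dvd_iff)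
      hence "multiplicity (int p) A = 0" unfolding A_def
        using True p by (intro not_dvd_ap_prod) auto
      thus ?thesis by simp
    next
      case False
      have ns: "\<not> int p dvd int s" using False by simp
      have "multiplicity (int p) A \<le> nu p n + Mp p x" unfolding A_def
      proof (rule ap_upper[OF p ns])
        fix t assume "t < n"
        have eq: "int (r + e2 * s) + int t * int s = int (r + (e2 + t) * s)" by (simp add: algebra_simps)
        from assms(8)[OF \<open>t < n\<close>] assms(1)
        show "0 < int (r + e2 * s) + int t * int s \<and> int (r + e2 * s) + int t * int s \<le> int x"
          unfolding eq of_nat_le_iff of_nat_0_less_iff by simp
      qed
      moreover have "multiplicity (int p) (int F2) = Mp p x" unfolding F2_def
        using mult_F2[OF p, of "\<lambda>q. \<not> q dvd s"] False by simp
      moreover have "nu p n \<le> multiplicity (int p) B + multiplicity (int p) (int F1)"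
      proof (cases "p dvd v")
        case True
        hence "p \<in> prime_factors v" using p assms(4) by (simp add: in_prime_factors_iff)
        hence "multiplicity (int p) (int F1) = nu p n" unfolding F1_def
          by (subst mult_primepow_prod) (auto simp: p in_prime_factors_iff)
        thus ?thesis by simp
      next
        case False
        hence "\<not> int p dvd int v" by simp
        from ap_lower[OF p this, where a="int (u + e1 * v)" and n=n]
        have "nu p n \<le> multiplicity (int p) B" unfolding B_def
          using mult_ge_of_dvd[OF p] B0 B_def by blast
        thus ?thesis by simp
      qed
      ultimately show ?thesis using mBF by linarith
    qed
  qed
  have "of_nat (s0 ^ n * (F1 * F2)) * (pochhammer (of_nat u / of_nat v + of_nat e1 :: rat) n / pochhammer (of_nat r / of_nat s + of_nat e2) n)
      = of_nat (s0 ^ n * (F1 * F2)) * ((of_int B / of_nat v ^ n) / (of_int A / of_nat s ^ n))"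
    unfolding A_def B_def using assms by (simp add: poch_nat)
  also have "\<dots> = of_nat (F1 * F2) * of_int B * (of_nat s0 * of_nat s) ^ n / (of_nat v ^ n * of_int A)"
    using assms A0 by (simp add: field_simps power_mult_distrib)
  also have "(of_nat s0 * of_nat s :: rat) = of_nat dd * of_nat v"
    using assms(7) by (metis of_nat_mult)
  also have "of_nat (F1 * F2) * of_int B * (of_nat dd * of_nat v) ^ n / (of_nat v ^ n * of_int A)
      = (of_int (B * int F1 * int F2 * int dd ^ n) / of_int A :: rat)"
    using assms A0 by (simp add: field_simps power_mult_distrib)
  also have "\<dots> \<in> \<int>" using dv by (intro div_Ints) simp
  finally show ?thesis unfolding F1_def F2_def .
qed




lemma Klem:
  fixes r s u v s0 dj dd S L Nt X :: nat
  assumes "r > 0" "s > 0" "u > 0" "v > 0" "s0 > 0" "coprime u v" "s0 * s = dj * v"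
    "dj dvd dd" "s dvd S" "S > 0" "L \<le> Nt" "\<And>t. t < L \<Longrightarrow> u + t * v \<le> X"
  shows "of_nat ((dd div gcd dd s0) ^ Nt * (\<Prod>p\<in>prime_factors S. p ^ nu p Nt) * (\<Prod>p\<in>{p. prime p \<and> p \<le> X}. p ^ Mp p X))
     * (pochhammer (of_nat r / of_nat s :: rat) L / pochhammer (of_nat u / of_nat v) L) \<in> \<int>"
proof -
  define R where "R = (\<Prod>t<L. int (r + 0 * s) + int t * int s)"
  define Q where "Q = (\<Prod>t<L. int (u + 0 * v) + int t * int v)"
  define F1 where "F1 = (\<Prod>p\<in>prime_factors S. p ^ nu p Nt)"
  define F2 where "F2 = (\<Prod>p\<in>{p. prime p \<and> p \<le> X}. p ^ Mp p X)"
  define g where "g = gcd dd s0"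
  define c where "c = dd div g"
  obtain w where w: "dd = dj * w" using assms(8) by blast
  define y where "y = w * (s0 div g)"
  have g0: "g > 0" unfolding g_def using assms(5) by simp
  have key: "c * v = y * s"
  proof -
    have "c * g = dd" unfolding c_def g_def by simp
    moreover have "(s0 div g) * g = s0" unfolding g_def by simp
    ultimately have "(c * v) * g = (y * s) * g" unfolding y_def
      using w assms(7) by (metis mult.assoc mult.commute)
    thus ?thesis using g0 by simp
  qed
  have pos: "int (c' + k) + int t * int w' > 0" if "c' > 0" for c' k t w' :: nat
    using that by (simp add: add_pos_nonneg)
  have R0: "R \<noteq> 0" unfolding R_def using pos[OF assms(1), of 0 _ s] by (simp add: prod_zero_iff) (metis less_irrefl)
  have Q0: "Q \<noteq> 0" unfolding Q_def using pos[OF assms(3), of 0 _ v] by (simp add: prod_zero_iff) (metis less_irrefl)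
  have F10: "int F1 \<noteq> 0" unfolding F1_def by (auto simp: prod_zero_iff in_prime_factors_iff)
  have F20: "int F2 \<noteq> 0" unfolding F2_def by (auto simp: prod_zero_iff)
  have dv: "Q dvd R * int F1 * int F2"
  proof (rule dvd_by_prime_mult[OF Q0])
    fix p :: nat assume p: "prime p"
    have mRF: "multiplicity (int p) (R * int F1 * int F2)
        = multiplicity (int p) R + multiplicity (int p) (int F1) + multiplicity (int p) (int F2)"
      using mult_mult_int[OF p] R0 F10 F20 by simp
    show "multiplicity (int p) Q \<le> multiplicity (int p) (R * int F1 * int F2)"
    proof (cases "p dvd v")
      case True
      have "\<not> p dvd u" using True assms(6) p
        by (metis coprime_common_divisor not_prime_unit)
      hence "\<not> int p dvd int (u + 0 * v)" by simp
      hence "multiplicity (int p) Q = 0" unfolding Q_def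
        using True p by (intro not_dvd_ap_prod) auto
      thus ?thesis by simp
    next
      case False
      have nv: "\<not> int p dvd int v" using False by simp
      have "multiplicity (int p) Q \<le> nu p L + Mp p X" unfolding Q_def
      proof (rule ap_upper[OF p nv])
        fix t assume "t < L"
        have eq: "int (u + 0 * v) + int t * int v = int (u + t * v)" by simp
        from assms(12)[OF \<open>t < L\<close>] assms(3)
        show "0 < int (u + 0 * v) + int t * int v \<and> int (u + 0 * v) + int t * int v \<le> int X"
          unfolding eq of_nat_le_iff of_nat_0_less_iff by simp
      qed
      moreover have "multiplicity (int p) (int F2) = Mp p X" unfolding F2_def
        using mult_F2[OF p, of "\<lambda>q. True" X] by simp
      moreover have "nu p L \<le> multiplicity (int p) R + multiplicity (int p) (int F1)"
      proof (cases "p dvd s")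
        case True
        hence "p dvd S" using assms(9) by (rule dvd_trans)
        hence "p \<in> prime_factors S" using p assms(10) by (simp add: in_prime_factors_iff)
        hence "multiplicity (int p) (int F1) = nu p Nt" unfolding F1_def
          by (subst mult_primepow_prod) (auto simp: p in_prime_factors_iff)
        moreover have "nu p L \<le> nu p Nt" using assms(11) prime_ge_2_nat[OF p] by (intro nu_mono)
        ultimately show ?thesis by simp
      next
        case False
        hence "\<not> int p dvd int s" by simp
        from ap_lower[OF p this, where a="int (r + 0 * s)" and n=L]
        have "nu p L \<le> multiplicity (int p) R" unfolding R_def
          using mult_ge_of_dvd[OF p] R0 R_def by blast
        thus ?thesis by simp
      qed
      ultimately show ?thesis using mRF by linarith
    qed
  qed
  have cNt: "c ^ Nt = c ^ (Nt - L) * c ^ L" using assms(11) by (simp add: power_add[symmetric])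
  have "of_nat (c ^ Nt * F1 * F2) * (pochhammer (of_nat r / of_nat s :: rat) L / pochhammer (of_nat u / of_nat v) L)
      = of_nat (c ^ Nt * F1 * F2) * ((of_int R / of_nat s ^ L) / (of_int Q / of_nat v ^ L))"
    using poch_nat[OF assms(2), of r 0 L] poch_nat[OF assms(4), of u 0 L] unfolding R_def Q_def by simp
  also have "\<dots> = of_nat (c ^ (Nt - L) * F1 * F2) * of_int R * (of_nat c * of_nat v) ^ L / (of_nat s ^ L * of_int Q)"
    unfolding cNt using assms Q0 by (simp add: field_simps power_mult_distrib)
  also have "(of_nat c * of_nat v :: rat) = of_nat y * of_nat s"
    using key by (metis of_nat_mult)
  also have "of_nat (c ^ (Nt - L) * F1 * F2) * of_int R * (of_nat y * of_nat s) ^ L / (of_nat s ^ L * of_int Q)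
      = (of_int (R * int F1 * int F2 * int (c ^ (Nt - L) * y ^ L)) / of_int Q :: rat)"
    using assms Q0 by (simp add: field_simps power_mult_distrib)
  also have "\<dots> \<in> \<int>" using dv by (intro div_Ints) simp
  finally show ?thesis unfolding F1_def F2_def c_def g_def .
qed




lemma rat_repr:
  assumes "q > (0::rat)"
  shows "q = of_nat (numr q) / of_nat (denr q) \<and> numr q > 0 \<and> denr q > 0 \<and> coprime (numr q) (denr q)"
proof -
  obtain a b where ab: "quotient_of q = (a, b)" by (cases "quotient_of q") auto
  have b0: "b > 0" using quotient_of_denom_pos[OF ab] .
  have cp: "coprime a b" using quotient_of_coprime[OF ab] .
  have q: "q = of_int a / of_int b" using quotient_of_div[OF ab] .
  have a0: "a > 0"
  proof (rule ccontr)
    assume "\<not> a > 0"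
    hence "of_int a / of_int b \<le> (0::rat)" using b0 by (simp add: divide_nonpos_pos)
    with assms q show False by simp
  qed
  have n: "numr q = nat a" and d: "denr q = nat b" unfolding numr_def denr_def ab by simp_all
  have "coprime (nat a) (nat b)" using cp a0 b0
    by (metis coprime_int_iff int_nat_eq order_less_le)
  thus ?thesis using a0 b0 q unfolding n d by simp
qed

lemma denr_dvd:
  fixes a b :: int
  assumes "b > 0" "q = of_int a / of_int b"
  shows "int (denr q) dvd b"
proof -
  obtain n d where nd: "quotient_of q = (n, d)" by (cases "quotient_of q") auto
  have d0: "d > 0" using quotient_of_denom_pos[OF nd] .
  have cp: "coprime n d" using quotient_of_coprime[OF nd] .
  have "of_int n / of_int d = (of_int a / of_int b :: rat)" using quotient_of_div[OF nd] assms(2) by simp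
  hence "of_int (n * b) = (of_int (a * d) :: rat)" using d0 assms(1) by (simp add: field_simps)
  hence e: "n * b = a * d" by (simp only: of_int_eq_iff)
  hence "d dvd n * b" by simp
  hence "d dvd b" using cp by (simp add: coprime_commute coprime_dvd_mult_right_iff)
  moreover have "denr q = nat d" unfolding denr_def nd by simp
  ultimately show ?thesis using d0 by simp
qed

lemma dvd_Ints_nat:
  assumes "(a::nat) dvd b" "of_nat a * (x::rat) \<in> \<int>"
  shows "of_nat b * x \<in> \<int>"
proof -
  obtain k where "b = a * k" using assms(1) by blast
  hence "of_nat b * x = of_nat k * (of_nat a * x)" by (simp add: mult_ac)
  moreover have "of_nat k * (of_nat a * x) \<in> \<int>" using Ints_mult[OF Ints_of_nat assms(2)] by simp
  ultimately show ?thesis by (simp only:)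
qed




lemma NN_ge1:
  assumes "m \<ge> 1" "\<forall>j\<in>{1..m}. n j > 0"
  shows "NN m n \<ge> 1"
proof -
  have "n 1 \<le> (\<Sum>j=1..m. n j)" using assms(1) by (intro member_le_sum) auto
  moreover have "n 1 > 0" using assms by auto
  ultimately show ?thesis unfolding NN_def by simp
qed

lemma dj_eq:
  assumes "\<alpha> 0 > 0" "\<alpha> j > 0"
  shows "denr (\<alpha> 0) * denr (\<alpha> j) = dj \<alpha> j * denr (\<alpha> j + \<alpha> 0)"
proof -
  note a0 = rat_repr[OF assms(1)] and aj = rat_repr[OF assms(2)]
  define r0 where "r0 = numr (\<alpha> 0)"
  define s0 where "s0 = denr (\<alpha> 0)"
  define r where "r = numr (\<alpha> j)"
  define s where "s = denr (\<alpha> j)"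
  have e0: "\<alpha> 0 = of_nat r0 / of_nat s0" and ej: "\<alpha> j = of_nat r / of_nat s"
    and p: "s0 > 0" "s > 0"
    using a0 aj unfolding r0_def s0_def r_def s_def by auto
  have eq: "\<alpha> j + \<alpha> 0 = of_int (int r * int s0 + int r0 * int s) / of_int (int s * int s0)"
    unfolding e0 ej using p by (simp add: field_simps)
  have "int s * int s0 > 0" using p by simp
  from denr_dvd[OF this eq] have "int (denr (\<alpha> j + \<alpha> 0)) dvd int s * int s0" .
  hence "denr (\<alpha> j + \<alpha> 0) dvd s0 * s" by (metis mult.commute of_nat_dvd_iff of_nat_mult)
  thus ?thesis unfolding dj_def s0_def s_def by simp
qed

lemma H_app:
  fixes \<alpha> :: "nat \<Rightarrow> rat" and n :: "nat \<Rightarrow> nat"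
  assumes "\<alpha> 0 > 0" "\<alpha> j > 0" "n j \<le> n 0"
  shows "of_nat (denr (\<alpha> 0) ^ n j * ((\<Prod>p\<in>prime_factors (denr (\<alpha> j + \<alpha> 0)). p ^ nu p (n j))
           * (let x = numr (\<alpha> j) + (n 0 + 1) * denr (\<alpha> j) in
              \<Prod>p\<in>{p. prime p \<and> \<not> p dvd denr (\<alpha> j) \<and> p \<le> x}. p ^ Mp p x)))
     * (pochhammer (\<alpha> j + \<alpha> 0 + of_nat (n 0) - of_nat (n j) + kdelta i j + of_nat l + 1) (n j)
        / pochhammer (\<alpha> j + of_nat (n 0) - of_nat (n j) + kdelta i j + 1) (n j)) \<in> \<int>"
proof -
  have b: "\<alpha> j + \<alpha> 0 > 0" using assms by simp
  note a0 = rat_repr[OF assms(1)] and aj = rat_repr[OF assms(2)] and bj = rat_repr[OF b]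
  define dl where "dl = (if i = j then 1 else 0 :: nat)"
  have kd: "kdelta i j = of_nat dl" unfolding kdelta_def dl_def by simp
  define e1 where "e1 = n 0 - n j + dl + l + 1"
  define e2 where "e2 = n 0 - n j + dl + 1"
  have nd: "(of_nat (n 0) - of_nat (n j) :: rat) = of_nat (n 0 - n j)" using assms(3) by (simp add: of_nat_diff)
  have E1: "\<alpha> j + \<alpha> 0 + of_nat (n 0) - of_nat (n j) + kdelta i j + of_nat l + 1
      = of_nat (numr (\<alpha> j + \<alpha> 0)) / of_nat (denr (\<alpha> j + \<alpha> 0)) + of_nat e1"
  proof -
    have "\<alpha> j + \<alpha> 0 + of_nat (n 0) - of_nat (n j) + kdelta i j + of_nat l + 1
        = (\<alpha> j + \<alpha> 0) + (of_nat (n 0) - of_nat (n j)) + kdelta i j + of_nat l + 1" by simp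
    also have "\<dots> = of_nat (numr (\<alpha> j + \<alpha> 0)) / of_nat (denr (\<alpha> j + \<alpha> 0)) + of_nat e1"
      unfolding nd kd e1_def using bj[THEN conjunct1, symmetric] by simp
    finally show ?thesis .
  qed
  have E2: "\<alpha> j + of_nat (n 0) - of_nat (n j) + kdelta i j + 1
      = of_nat (numr (\<alpha> j)) / of_nat (denr (\<alpha> j)) + of_nat e2"
  proof -
    have "\<alpha> j + of_nat (n 0) - of_nat (n j) + kdelta i j + 1
        = \<alpha> j + (of_nat (n 0) - of_nat (n j)) + kdelta i j + 1" by simp
    also have "\<dots> = of_nat (numr (\<alpha> j)) / of_nat (denr (\<alpha> j)) + of_nat e2"
      unfolding nd kd e2_def using aj[THEN conjunct1, symmetric] by simp
    finally show ?thesis .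
  qed
  have cond: "numr (\<alpha> j) + (e2 + t) * denr (\<alpha> j) \<le> numr (\<alpha> j) + (n 0 + 1) * denr (\<alpha> j)" if "t < n j" for t
  proof -
    have "e2 + t \<le> n 0 + 1" unfolding e2_def dl_def using that assms(3) by auto
    thus ?thesis by (intro add_left_mono mult_right_mono) auto
  qed
  show ?thesis unfolding E1 E2 Let_def
    by (rule H[OF aj[THEN conjunct2, THEN conjunct1] aj[THEN conjunct2, THEN conjunct2, THEN conjunct1]
          bj[THEN conjunct2, THEN conjunct1] bj[THEN conjunct2, THEN conjunct2, THEN conjunct1]
          a0[THEN conjunct2, THEN conjunct2, THEN conjunct1] aj[THEN conjunct2, THEN conjunct2, THEN conjunct2]
          dj_eq[OF assms(1,2)] cond])
qed

lemma G_app1: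
  assumes "\<alpha> 0 > 0"
  shows "of_nat (denr (\<alpha> 0) ^ b * (\<Prod>p\<in>prime_factors (denr (\<alpha> 0)). p ^ nu p b))
      * (pochhammer (\<alpha> 0 - 1) b / fact b) \<in> \<int>"
proof -
  note a0 = rat_repr[OF assms(1)]
  define r0 where "r0 = numr (\<alpha> 0)"
  define s0 where "s0 = denr (\<alpha> 0)"
  have e0: "\<alpha> 0 = of_nat r0 / of_nat s0" and p: "s0 > 0"
    using a0 unfolding r0_def s0_def by auto
  have "\<alpha> 0 - 1 = of_int (int r0 - int s0) / of_nat s0"
    unfolding e0 using p by (simp add: field_simps)
  thus ?thesis using G[where s=s0 and a="int r0 - int s0" and b=b] p unfolding s0_def by simp
qed

lemma G_app2:
  assumes "\<alpha> 0 > 0"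
  shows "of_nat (denr (\<alpha> 0) ^ b * (\<Prod>p\<in>prime_factors (denr (\<alpha> 0)). p ^ nu p b))
      * (pochhammer (\<alpha> 0 + of_nat l + 1) b / fact b) \<in> \<int>"
proof -
  note a0 = rat_repr[OF assms(1)]
  define r0 where "r0 = numr (\<alpha> 0)"
  define s0 where "s0 = denr (\<alpha> 0)"
  have e0: "\<alpha> 0 = of_nat r0 / of_nat s0" and p: "s0 > 0"
    using a0 unfolding r0_def s0_def by auto
  have "\<alpha> 0 + of_nat l + 1 = of_int (int (r0 + (l + 1) * s0)) / of_nat s0"
    unfolding e0 using p by (simp add: field_simps)
  thus ?thesis using G[where s=s0 and a="int (r0 + (l + 1) * s0)" and b=b] p unfolding s0_def by simp
qed




lemma nu_prod_dvd:
  assumes "b1 + b2 \<le> M"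
  shows "(\<Prod>p\<in>prime_factors s. p ^ nu p b1) * (\<Prod>p\<in>prime_factors s. p ^ nu p b2)
         dvd (\<Prod>p\<in>prime_factors s. (p::nat) ^ nu p M)"
proof -
  have "(\<Prod>p\<in>prime_factors s. p ^ nu p b1) * (\<Prod>p\<in>prime_factors s. p ^ nu p b2)
      = (\<Prod>p\<in>prime_factors s. p ^ (nu p b1 + nu p b2))"
    by (simp add: prod.distrib power_add)
  also have "\<dots> dvd (\<Prod>p\<in>prime_factors s. p ^ nu p M)"
  proof (rule prod_dvd_prod)
    fix p assume "p \<in> prime_factors s"
    hence p2: "p \<ge> 2" by (simp add: in_prime_factors_iff prime_ge_2_nat)
    have "nu p b1 + nu p b2 \<le> nu p (b1 + b2)" by (rule nu_add[OF p2])
    also have "\<dots> \<le> nu p M" using assms p2 by (intro nu_mono)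
    finally show "p ^ (nu p b1 + nu p b2) dvd p ^ nu p M" by (rule le_imp_power_dvd)
  qed
  finally show ?thesis .
qed

lemma partA:
  fixes m :: nat and \<alpha> :: "nat \<Rightarrow> rat" and n :: "nat \<Rightarrow> nat"
  assumes "m \<ge> 1" "\<forall>j\<le>m. \<alpha> j > 0" "\<forall>j\<in>{1..m}. n j > 0" "\<forall>j\<in>{1..m}. n j \<le> n 0"
    "K \<le> NN m n"
  shows "of_nat (D1 m \<alpha> n) * acoef m \<alpha> n i K \<in> \<int>"
proof -
  define N where "N = NN m n"
  define s0 where "s0 = denr (\<alpha> 0)"
  have N1: "N \<ge> 1" unfolding N_def using NN_ge1 assms by blast
  have a0: "\<alpha> 0 > 0" using assms(2) by auto
  define C1 where "C1 = s0 ^ (N - 1) * (\<Prod>p\<in>prime_factors s0. p ^ nu p (N - 1))"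
  define F where "F = (\<lambda>j. (\<Prod>p\<in>prime_factors (denr (\<alpha> j + \<alpha> 0)). p ^ nu p (n j))
           * (let x = numr (\<alpha> j) + (n 0 + 1) * denr (\<alpha> j) in
              \<Prod>p\<in>{p. prime p \<and> \<not> p dvd denr (\<alpha> j) \<and> p \<le> x}. p ^ Mp p x))"
  define C2 where "C2 = s0 ^ N * (\<Prod>j=1..m. F j)"
  have D1eq: "D1 m \<alpha> n = C1 * C2"
  proof -
    have "2 * N - 1 = (N - 1) + N" using N1 by simp
    hence "s0 ^ (2 * N - 1) = s0 ^ (N - 1) * s0 ^ N" by (simp add: power_add)
    thus ?thesis unfolding D1_def Let_def C1_def C2_def F_def N_def[symmetric] s0_def[symmetric]
      by (simp add: mult_ac)
  qed
  have C2T: "of_nat C2 * (\<Prod>j=1..m.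
              pochhammer (\<alpha> j + \<alpha> 0 + of_nat (n 0) - of_nat (n j) + kdelta i j + of_nat l + 1) (n j)
              / pochhammer (\<alpha> j + of_nat (n 0) - of_nat (n j) + kdelta i j + 1) (n j)) \<in> \<int>" for l
  proof -
    define Rt where "Rt = (\<lambda>j. pochhammer (\<alpha> j + \<alpha> 0 + of_nat (n 0) - of_nat (n j) + kdelta i j + of_nat l + 1) (n j)
              / pochhammer (\<alpha> j + of_nat (n 0) - of_nat (n j) + kdelta i j + 1) (n j))"
    have R: "of_nat (s0 ^ n j * F j) * Rt j \<in> \<int>" if j: "j \<in> {1..m}" for j
    proof -
      have "\<alpha> j > 0" using j assms(2) by auto
      moreover have "n j \<le> n 0" using j assms(4) by auto
      ultimately show ?thesis
        using H_app[where \<alpha>=\<alpha> and j=j and n=n and i=i and l=l] a0 unfolding F_def s0_def Rt_def by simp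
    qed
    have "s0 ^ N = (\<Prod>j=1..m. s0 ^ n j)" unfolding N_def NN_def by (simp add: power_sum)
    hence "of_nat C2 * (\<Prod>j=1..m. Rt j) = (\<Prod>j=1..m. of_nat (s0 ^ n j * F j) * Rt j)"
      unfolding C2_def by (simp add: prod.distrib)
    also have "\<dots> \<in> \<int>" using R by (intro Ints_prod) auto
    finally show ?thesis unfolding Rt_def .
  qed
  show ?thesis
  proof (cases "K = N")
    case True
    thus ?thesis unfolding acoef_def N_def by simp
  next
    case False
    with assms(5) have KN: "K < N" unfolding N_def by simp
    define kk where "kk = N - K - 1"
    define T where "T = (\<lambda>l. (-1) ^ (l + 1)
          * (pochhammer (\<alpha> 0 - 1) (l - kk) / fact (l - kk))
          * (pochhammer (\<alpha> 0 + of_nat l + 1) (N - l - 1) / fact (N - l - 1))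
          * (\<Prod>j=1..m.
              pochhammer (\<alpha> j + \<alpha> 0 + of_nat (n 0) - of_nat (n j) + kdelta i j + of_nat l + 1) (n j)
              / pochhammer (\<alpha> j + of_nat (n 0) - of_nat (n j) + kdelta i j + 1) (n j)) :: rat)"
    have aK: "acoef m \<alpha> n i K = (\<Sum>l=kk..N-1. T l)"
      unfolding acoef_def Let_def N_def[symmetric] kk_def[symmetric] T_def using KN by simp
    have "of_nat (D1 m \<alpha> n) * T l \<in> \<int>" if l: "l \<in> {kk..N-1}" for l
    proof -
      define b1 where "b1 = l - kk"
      define b2 where "b2 = N - l - 1"
      have bb: "b1 + b2 \<le> N - 1" unfolding b1_def b2_def using l by auto
      have g1: "of_nat (s0 ^ b1 * (\<Prod>p\<in>prime_factors s0. p ^ nu p b1))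
          * (pochhammer (\<alpha> 0 - 1) b1 / fact b1) \<in> \<int>"
        unfolding s0_def using G_app1[where \<alpha>=\<alpha> and b=b1] a0 by simp
      have g2: "of_nat (s0 ^ b2 * (\<Prod>p\<in>prime_factors s0. p ^ nu p b2))
          * (pochhammer (\<alpha> 0 + of_nat l + 1) b2 / fact b2) \<in> \<int>"
        unfolding s0_def using G_app2[where \<alpha>=\<alpha> and b=b2 and l=l] a0 by simp
      have "of_nat ((s0 ^ b1 * (\<Prod>p\<in>prime_factors s0. p ^ nu p b1)) * (s0 ^ b2 * (\<Prod>p\<in>prime_factors s0. p ^ nu p b2)))
          * ((pochhammer (\<alpha> 0 - 1) b1 / fact b1) * (pochhammer (\<alpha> 0 + of_nat l + 1) b2 / fact b2)) \<in> \<int>"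
        using Ints_mult[OF g1 g2] by (simp add: mult_ac)
      moreover have "(s0 ^ b1 * (\<Prod>p\<in>prime_factors s0. p ^ nu p b1)) * (s0 ^ b2 * (\<Prod>p\<in>prime_factors s0. p ^ nu p b2))
          dvd C1"
      proof -
        have "(s0 ^ b1 * (\<Prod>p\<in>prime_factors s0. p ^ nu p b1)) * (s0 ^ b2 * (\<Prod>p\<in>prime_factors s0. p ^ nu p b2))
            = s0 ^ (b1 + b2) * ((\<Prod>p\<in>prime_factors s0. p ^ nu p b1) * (\<Prod>p\<in>prime_factors s0. p ^ nu p b2))"
          by (simp add: power_add mult_ac)
        also have "\<dots> dvd C1" unfolding C1_def
          using bb by (intro mult_dvd_mono le_imp_power_dvd nu_prod_dvd)
        finally show ?thesis .
      qed
      ultimately have c1: "of_nat C1 * ((pochhammer (\<alpha> 0 - 1) b1 / fact b1) * (pochhammer (\<alpha> 0 + of_nat l + 1) b2 / fact b2)) \<in> \<int>"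
        by (rule dvd_Ints_nat[rotated])
      have "of_nat (D1 m \<alpha> n) * T l = (-1) ^ (l + 1) *
          (of_nat C1 * ((pochhammer (\<alpha> 0 - 1) b1 / fact b1) * (pochhammer (\<alpha> 0 + of_nat l + 1) b2 / fact b2)))
          * (of_nat C2 * (\<Prod>j=1..m.
              pochhammer (\<alpha> j + \<alpha> 0 + of_nat (n 0) - of_nat (n j) + kdelta i j + of_nat l + 1) (n j)
              / pochhammer (\<alpha> j + of_nat (n 0) - of_nat (n j) + kdelta i j + 1) (n j)))"
        unfolding D1eq T_def b1_def b2_def by (simp add: mult_ac)
      also have "\<dots> \<in> \<int>" by (rule Ints_mult[OF Ints_mult[OF Ints_power[OF Ints_minus[OF Ints_1]] c1] C2T[of l]])
      finally show ?thesis .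
    qed
    hence "(\<Sum>l=kk..N-1. of_nat (D1 m \<alpha> n) * T l) \<in> \<int>" by (intro Ints_sum)
    thus ?thesis unfolding aK by (simp add: sum_distrib_left)
  qed
qed




lemma partB:
  fixes m :: nat and \<alpha> :: "nat \<Rightarrow> rat" and n :: "nat \<Rightarrow> nat"
  assumes "m \<ge> 1" "\<forall>j\<le>m. \<alpha> j > 0" "\<forall>j\<in>{1..m}. n j > 0" "\<forall>j\<in>{1..m}. n j \<le> n 0"
    "j \<in> {1..m}" "L \<le> Ntil m n"
  shows "of_nat (D2 m \<alpha> n) * (pochhammer (\<alpha> j) L / pochhammer (\<alpha> j + \<alpha> 0) L) \<in> \<int>"
proof -
  have a0: "\<alpha> 0 > 0" and aj: "\<alpha> j > 0" using assms(2,5) by auto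
  have b: "\<alpha> j + \<alpha> 0 > 0" using a0 aj by simp
  note A0 = rat_repr[OF a0] and Aj = rat_repr[OF aj] and Bj = rat_repr[OF b]
  define Nt where "Nt = Ntil m n"
  define S where "S = Lcm ((\<lambda>j. denr (\<alpha> j)) ` {1..m})"
  define d where "d = Lcm ((\<lambda>j. dj \<alpha> j) ` {1..m})"
  define U where "U = Max ((\<lambda>j. numr (\<alpha> j + \<alpha> 0)) ` {1..m})"
  define V where "V = Max ((\<lambda>j. denr (\<alpha> j + \<alpha> 0)) ` {1..m})"
  have D2eq: "D2 m \<alpha> n = (d div gcd d (denr (\<alpha> 0))) ^ Nt * (\<Prod>p\<in>prime_factors S. p ^ nu p Nt)
      * (\<Prod>p\<in>{p. prime p \<and> p \<le> U + V * Nt}. p ^ Mp p (U + V * Nt))"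
    unfolding D2_def Let_def Nt_def S_def d_def U_def V_def by simp
  have S0: "S > 0"
  proof -
    have "S \<noteq> 0" unfolding S_def using Lcm_0_iff[of "(\<lambda>j. denr (\<alpha> j)) ` {1..m}"] assms(2)
      rat_repr by fastforce
    thus ?thesis by simp
  qed
  have sS: "denr (\<alpha> j) dvd S" unfolding S_def using assms(5) by (intro dvd_Lcm) auto
  have dd: "dj \<alpha> j dvd d" unfolding d_def using assms(5) by (intro dvd_Lcm) auto
  have uU: "numr (\<alpha> j + \<alpha> 0) \<le> U" unfolding U_def using assms(5) by (intro Max_ge) auto
  have vV: "denr (\<alpha> j + \<alpha> 0) \<le> V" unfolding V_def using assms(5) by (intro Max_ge) auto
  have LN: "L \<le> Nt" using assms(6) unfolding Nt_def .
  have X: "numr (\<alpha> j + \<alpha> 0) + t * denr (\<alpha> j + \<alpha> 0) \<le> U + V * Nt" if "t < L" for t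
  proof -
    have "t * denr (\<alpha> j + \<alpha> 0) \<le> Nt * V" using that LN vV by (intro mult_mono) auto
    thus ?thesis using uU by (simp add: mult.commute)
  qed
  have eqa: "pochhammer (\<alpha> j) L / pochhammer (\<alpha> j + \<alpha> 0) L
      = pochhammer (of_nat (numr (\<alpha> j)) / of_nat (denr (\<alpha> j))) L
        / pochhammer (of_nat (numr (\<alpha> j + \<alpha> 0)) / of_nat (denr (\<alpha> j + \<alpha> 0))) L"
    using Aj[THEN conjunct1] Bj[THEN conjunct1] by simp
  show ?thesis unfolding D2eq eqa
    by (rule Klem[OF Aj[THEN conjunct2, THEN conjunct1] Aj[THEN conjunct2, THEN conjunct2, THEN conjunct1]
          Bj[THEN conjunct2, THEN conjunct1] Bj[THEN conjunct2, THEN conjunct2, THEN conjunct1]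
          A0[THEN conjunct2, THEN conjunct2, THEN conjunct1] Bj[THEN conjunct2, THEN conjunct2, THEN conjunct2]
          dj_eq[OF a0 aj] dd sS S0 LN X])
qed

theorem lemma4:
  fixes m :: nat and \<alpha> :: "nat \<Rightarrow> rat" and n :: "nat \<Rightarrow> nat"
  assumes "m \<ge> 1"
    and "\<forall>j\<le>m. \<alpha> j > 0"
    and "\<forall>i j. 1 \<le> i \<and> i < j \<and> j \<le> m \<longrightarrow> \<alpha> i - \<alpha> j \<notin> \<int>"
    and "\<forall>j\<in>{1..m}. n j > 0"
    and "\<forall>j\<in>{1..m}. n j \<le> n 0"
  shows "(\<forall>i\<le>m. \<forall>k\<le>NN m n. of_nat (DD m \<alpha> n) * acoef m \<alpha> n i k \<in> \<int>)
       \<and> (\<forall>i\<le>m. \<forall>j\<in>{1..m}. \<forall>\<mu>\<le>Ntil m n - n j + (if i = j then 1 else 0).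
            of_nat (DD m \<alpha> n) * ccoef m \<alpha> n i j \<mu> \<in> \<int>)"
proof (intro conjI allI impI ballI)
  fix i k assume "i \<le> m" "k \<le> NN m n"
  have "of_nat (D1 m \<alpha> n) * acoef m \<alpha> n i k \<in> \<int>"
    using partA[OF assms(1,2,4,5) \<open>k \<le> NN m n\<close>] .
  hence "of_nat (D2 m \<alpha> n) * (of_nat (D1 m \<alpha> n) * acoef m \<alpha> n i k) \<in> \<int>"
    by (rule Ints_mult[OF Ints_of_nat])
  thus "of_nat (DD m \<alpha> n) * acoef m \<alpha> n i k \<in> \<int>" unfolding DD_def by (simp add: mult_ac)
next
  fix i j \<mu> assume i: "i \<le> m" and j: "j \<in> {1..m}" and mu: "\<mu> \<le> Ntil m n - n j + (if i = j then 1 else 0)"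
  have "n j > 0" using j assms(4) by blast
  hence nj: "n j \<ge> 1" by simp
  have "n j \<le> Ntil m n" unfolding Ntil_def NN_def using j by (simp add: member_le_sum trans_le_add1)
  hence muN: "\<mu> \<le> Ntil m n" using mu nj by (auto split: if_splits)
  have "of_nat (DD m \<alpha> n) * ccoef m \<alpha> n i j \<mu>
     = (\<Sum>k=0..min (NN m n) \<mu>. (of_nat (D1 m \<alpha> n) * acoef m \<alpha> n i k)
         * (of_nat (D2 m \<alpha> n) * (pochhammer (\<alpha> j) (\<mu> - k) / pochhammer (\<alpha> j + \<alpha> 0) (\<mu> - k))))"
    unfolding ccoef_def DD_def by (simp add: sum_distrib_left mult_ac)
  also have "\<dots> \<in> \<int>"
  proof (rule Ints_sum)
    fix k assume k: "k \<in> {0..min (NN m n) \<mu>}"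
    have "of_nat (D1 m \<alpha> n) * acoef m \<alpha> n i k \<in> \<int>"
      using k by (intro partA[OF assms(1,2,4,5)]) auto
    moreover have "of_nat (D2 m \<alpha> n) * (pochhammer (\<alpha> j) (\<mu> - k) / pochhammer (\<alpha> j + \<alpha> 0) (\<mu> - k)) \<in> \<int>"
      using muN by (intro partB[OF assms(1,2,4,5) j]) auto
    ultimately show "(of_nat (D1 m \<alpha> n) * acoef m \<alpha> n i k)
         * (of_nat (D2 m \<alpha> n) * (pochhammer (\<alpha> j) (\<mu> - k) / pochhammer (\<alpha> j + \<alpha> 0) (\<mu> - k))) \<in> \<int>"
      by (rule Ints_mult)
  qed
  finally show "of_nat (DD m \<alpha> n) * ccoef m \<alpha> n i j \<mu> \<in> \<int>" .
qed


end
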